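(* Let $D_\sigma>0$, $k_\mathrm{d}\ge0$, $r_{\mathrm{R}}>0$, $r_{\mathrm{T}}>0$, $r_0>r_{\mathrm{T}}+r_{\mathrm{R}}$ and $w_\mathrm{e}>0$. For $r>r_{\mathrm{R}}$ let $$h_\mathrm{p}(t,r)=\frac{r_{\mathrm{R}}w_\mathrm{e}}{r}\left[\frac{1}{\sqrt{\pi D_\sigma t}}\exp\Big(-\frac{(r-r_{\mathrm{R}})^2}{4D_\sigma t}-k_\mathrm{d}t\Big)-\gamma(w_\mathrm{e})\exp\big(\gamma(w_\mathrm{e})(r-r_{\mathrm{R}})+\zeta(w_\mathrm{e})t\big)\mathrm{erfc}\Big(\frac{r-r_{\mathrm{R}}}{\sqrt{4D_\sigma t}}+\gamma(w_\mathrm{e})\sqrt{D_\sigma t}\Big)\right],$$ and define $$h_\mathrm{s}(t)=\frac{1}{2r_{\mathrm{T}}}\int_{-r_{\mathrm{T}}}^{r_{\mathrm{T}}}h_\mathrm{p}\Big(t,\sqrt{r_{\mathrm{T}}^2+r_0^2-2r_0x}\Big)\,\mathrm{d}x.$$ Then $$h_\mathrm{s}(t)=\frac{r_{\mathrm{R}}w_\mathrm{e}}{2r_{\mathrm{T}}r_0}\big[\xi_1(t,r_0-r_{\mathrm{T}}-r_{\mathrm{R}})-\xi_1(t,r_0+r_{\mathrm{T}}-r_{\mathrm{R}})\big],$$ where $\xi_1(t,z)=\exp\big(\gamma(w_\mathrm{e})z+\zeta(w_\mathrm{e})t\big)\,\mathrm{erfc}\Big(\varpi(w_\mathrm{e})\sqrt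 t+\frac{z}{\sqrt{4D_\sigma t}}\Big)$.
   Context: Notation: $\gamma(w)=\frac{wr_{\mathrm{R}}+D_\sigma}{D_\sigma r_{\mathrm{R}}}$, $\zeta(w)=\gamma(w)^2D_\sigma-k_\mathrm{d}$, $\varpi(w)=\gamma(w)\sqrt{D_\sigma}$. $h_\mathrm{p}(t,r)$ is the expected hitting rate at the (homogenized) receiver of radius $r_{\mathrm{R}}$ with effective reaction rate $w_\mathrm{e}$ for a point release at distance $r$ from its center; $h_\mathrm{s}(t)$ is the hitting rate when molecules are released uniformly at time 0 from a sphere of radius $r_{\mathrm{T}}$ whose center lies at distance $r_0$ from the receiver center. *)

theory Defs
  imports "HOL-Analysis.Analysis"
begin

definition erfc :: "real \<Rightarrow> real" where
  "erfc x = 2 / sqrt pi * integral {x..} (\<lambda>s. exp (- (s\<^sup>2)))"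

definition gam :: "real \<Rightarrow> real \<Rightarrow> real \<Rightarrow> real" where
  "gam D rR w = (w * rR + D) / (D * rR)"

definition zeta :: "real \<Rightarrow> real \<Rightarrow> real \<Rightarrow> real \<Rightarrow> real" where
  "zeta D kd rR w = (gam D rR w)\<^sup>2 * D - kd"

definition varpi :: "real \<Rightarrow> real \<Rightarrow> real \<Rightarrow> real" where
  "varpi D rR w = gam D rR w * sqrt D"

definition hp :: "real \<Rightarrow> real \<Rightarrow> real \<Rightarrow> real \<Rightarrow> real \<Rightarrow> real \<Rightarrow> real" where
  "hp D kd rR we t r =
     rR * we / r *
     (1 / sqrt (pi * D * t) * exp (- ((r - rR)\<^sup>2) / (4 * D * t) - kd * t)
      - gam D rR we * exp (gam D rR we * (r - rR) + zeta D kd rR we * t)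
        * erfc ((r - rR) / sqrt (4 * D * t) + gam D rR we * sqrt (D * t)))"

definition hs :: "real \<Rightarrow> real \<Rightarrow> real \<Rightarrow> real \<Rightarrow> real \<Rightarrow> real \<Rightarrow> real \<Rightarrow> real" where
  "hs D kd rR rT r0 we t =
     1 / (2 * rT) * integral {-rT..rT} (\<lambda>x. hp D kd rR we t (sqrt (rT\<^sup>2 + r0\<^sup>2 - 2 * r0 * x)))"

definition xi1 :: "real \<Rightarrow> real \<Rightarrow> real \<Rightarrow> real \<Rightarrow> real \<Rightarrow> real \<Rightarrow> real" where
  "xi1 D kd rR we t z =
     exp (gam D rR we * z + zeta D kd rR we * t)
     * erfc (varpi D rR we * sqrt t + z / sqrt (4 * D * t))"

end

theory Submission imports Defs
begin

lemma gauss_int: "(\<lambda>s::real. exp (- (s\<^sup>2))) integrable_on {c..}"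
proof (rule measurable_bounded_by_integrable_imp_integrable)
  show "(\<lambda>s::real. exp (- (s\<^sup>2))) \<in> borel_measurable (lebesgue_on {c..})"
    by (rule continuous_imp_measurable_on_sets_lebesgue) (auto intro!: continuous_intros)
  show "(\<lambda>s::real. exp 1 * exp (- 2 * s)) integrable_on {c..}"
    using integrable_on_cmult_left[OF integrable_on_exp_minus_to_infinity[of 2 c], of "exp 1"] by simp
  show "norm (exp (- (x\<^sup>2))) \<le> exp 1 * exp (- 2 * x)" if "x \<in> {c..}" for x
  proof -
    have "0 \<le> (x - 1)\<^sup>2" by simp
    then have "- (x\<^sup>2) \<le> 1 - 2 * x" by (simp add: power2_eq_square algebra_simps)
    then have "exp (- (x\<^sup>2)) \<le> exp (1 - 2 * x)" by simp
    also have "\<dots> = exp 1 * exp (- 2 * x)" by (simp add: mult_exp_exp)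
    finally show ?thesis by simp
  qed
  show "{c..} \<in> sets lebesgue" by simp
qed

lemma erfc_deriv: "(erfc has_real_derivative (-2 / sqrt pi * exp (- (x\<^sup>2)))) (at x)"
proof -
  let ?f = "\<lambda>s::real. exp (- (s\<^sup>2))"
  define c where "c = x - 1"
  have eq: "erfc y = 2 / sqrt pi * (integral {c..} ?f - integral {c..y} ?f)" if "y \<in> {c<..}" for y
  proof -
    have "{c..} = {c..y} \<union> {y..}" using that by auto
    moreover have "{c..y} \<inter> {y..} = {y}" using that by auto
    moreover have "?f integrable_on {c..y}" by (intro integrable_continuous_interval continuous_intros)
    ultimately have "integral {c..} ?f = integral {c..y} ?f + integral {y..} ?f"
      using gauss_int[of y] by (metis integral_Un negligible_sing)
    then show ?thesis unfolding erfc_def by simp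
  qed
  have d: "((\<lambda>y. integral {c..y} ?f) has_real_derivative ?f x) (at x)"
  proof -
    have "((\<lambda>y. integral {c..y} ?f) has_real_derivative ?f x) (at x within {c..x+1})"
      by (rule integral_has_real_derivative) (auto simp: c_def intro!: continuous_intros)
    moreover have "x \<in> interior {c..x+1}" by (simp add: c_def)
    ultimately show ?thesis by (metis at_within_interior)
  qed
  have "((\<lambda>y. 2 / sqrt pi * (integral {c..} ?f - integral {c..y} ?f)) has_real_derivative
        2 / sqrt pi * (0 - ?f x)) (at x)"
    by (intro DERIV_cmult DERIV_diff DERIV_const d)
  then have "((\<lambda>y. 2 / sqrt pi * (integral {c..} ?f - integral {c..y} ?f)) has_real_derivative
        (-2 / sqrt pi * ?f x)) (at x)" by simp
  then show ?thesis
    by (rule has_field_derivative_transform_within_open[where S="{c<..}"]) (auto simp: c_def eq)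
qed

lemma xi1_deriv:
  fixes D kd rR we t z :: real
  assumes D: "D > 0" and t: "t > 0"
  shows "((\<lambda>z. xi1 D kd rR we t z) has_real_derivative
     - (1 / sqrt (pi * D * t) * exp (- (z\<^sup>2) / (4 * D * t) - kd * t)
      - gam D rR we * exp (gam D rR we * z + zeta D kd rR we * t)
        * erfc (z / sqrt (4 * D * t) + gam D rR we * sqrt (D * t)))) (at z)"
proof -
  define g where "g = gam D rR we"
  define ze where "ze = zeta D kd rR we"
  define q where "q = sqrt (D * t)"
  have q: "q > 0" "q\<^sup>2 = D * t" using D t by (auto simp: q_def)
  have t_eq: "t = q\<^sup>2 / D" using q D by simp
  have s: "sqrt (4 * D * t) = 2 * q" by (simp add: q_def real_sqrt_mult)
  have a: "varpi D rR we * sqrt t = g * q"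
    by (simp add: varpi_def g_def q_def real_sqrt_mult)
  have ze: "ze = g\<^sup>2 * D - kd" by (simp add: ze_def g_def zeta_def)
  have xi: "xi1 D kd rR we t = (\<lambda>z. exp (g * z + ze * t) * erfc (g * q + z / (2 * q)))"
    by (rule ext) (simp add: xi1_def g_def ze_def s a add.commute)
  have d: "((\<lambda>z. exp (g * z + ze * t) * erfc (g * q + z / (2 * q))) has_real_derivative
      exp (g * z + ze * t) * g * erfc (g * q + z / (2 * q))
      + exp (g * z + ze * t) * (-2 / sqrt pi * exp (- ((g * q + z / (2 * q))\<^sup>2)) * (1 / (2 * q)))) (at z)"
  proof -
    have e1: "((\<lambda>z. exp (g * z + ze * t)) has_real_derivative exp (g * z + ze * t) * g) (at z)"
      by (auto intro!: derivative_eq_intros)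
    have e2: "((\<lambda>z. g * q + z / (2 * q)) has_real_derivative 1 / (2 * q)) (at z)"
      using q by (auto intro!: derivative_eq_intros)
    have e3: "((\<lambda>z. erfc (g * q + z / (2 * q))) has_real_derivative
        (-2 / sqrt pi * exp (- ((g * q + z / (2 * q))\<^sup>2))) * (1 / (2 * q))) (at z)"
      using DERIV_chain2[OF erfc_deriv e2] .
    show ?thesis using DERIV_mult[OF e1 e3] by (simp add: mult.commute)
  qed
  have key: "exp (g * z + ze * t) * exp (- ((g * q + z / (2 * q))\<^sup>2))
      = exp (- (z\<^sup>2) / (4 * D * t) - kd * t)"
  proof -
    have "g * z + ze * t - ((g * q + z / (2 * q))\<^sup>2) = - (z\<^sup>2) / (4 * D * t) - kd * t"
      using q(1) D unfolding ze t_eq by (simp add: field_simps power2_eq_square)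
    then have eq: "g * z + ze * t + - ((g * q + z / (2 * q))\<^sup>2) = - (z\<^sup>2) / (4 * D * t) - kd * t"
      by simp
    show ?thesis unfolding mult_exp_exp eq ..
  qed
  have c: "2 / sqrt pi * (1 / (2 * q)) = 1 / sqrt (pi * D * t)"
    using q by (simp add: q_def real_sqrt_mult field_simps)
  have "exp (g * z + ze * t) * g * erfc (g * q + z / (2 * q))
      + exp (g * z + ze * t) * (-2 / sqrt pi * exp (- ((g * q + z / (2 * q))\<^sup>2)) * (1 / (2 * q)))
    = g * exp (g * z + ze * t) * erfc (z / (2 * q) + g * q)
      - (2 / sqrt pi * (1 / (2 * q))) * (exp (g * z + ze * t) * exp (- ((g * q + z / (2 * q))\<^sup>2)))"
    by (simp add: algebra_simps)
  also have "\<dots> = - (1 / sqrt (pi * D * t) * exp (- (z\<^sup>2) / (4 * D * t) - kd * t)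
      - g * exp (g * z + ze * t) * erfc (z / (2 * q) + g * q))"
    unfolding key c by simp
  finally show ?thesis using d unfolding xi s g_def[symmetric] ze_def[symmetric] q_def[symmetric] by simp
qed

theorem lemma2:
  fixes D kd rR rT r0 we t :: real
  assumes "D > 0" and "kd \<ge> 0" and "rR > 0" and "rT > 0"
    and "r0 > rT + rR" and "we > 0" and "t > 0"
  shows "hs D kd rR rT r0 we t =
           rR * we / (2 * rT * r0) *
           (xi1 D kd rR we t (r0 - rT - rR) - xi1 D kd rR we t (r0 + rT - rR))"
proof -
  note D = assms(1) and t = assms(7)
  define Bf where "Bf z = 1 / sqrt (pi * D * t) * exp (- (z\<^sup>2) / (4 * D * t) - kd * t)
      - gam D rR we * exp (gam D rR we * z + zeta D kd rR we * t)
        * erfc (z / sqrt (4 * D * t) + gam D rR we * sqrt (D * t))" for z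
  define r where "r x = sqrt (rT\<^sup>2 + r0\<^sup>2 - 2 * r0 * x)" for x
  define F where "F x = xi1 D kd rR we t (r x - rR)" for x
  have arg: "rT\<^sup>2 + r0\<^sup>2 - 2 * r0 * x > 0" if "x \<in> {-rT..rT}" for x
  proof -
    have "2 * r0 * x \<le> 2 * r0 * rT" using that assms by (intro mult_left_mono) auto
    moreover have "(r0 - rT)\<^sup>2 > 0" using assms by simp
    ultimately show ?thesis by (simp add: power2_eq_square algebra_simps)
  qed
  have rpos: "r x > 0" if "x \<in> {-rT..rT}" for x using arg[OF that] by (simp add: r_def)
  have hp_eq: "hp D kd rR we t (r x) = rR * we / r0 * (- Bf (r x - rR) * (- r0 / r x))"
    if "x \<in> {-rT..rT}" for x
  proof -
    have "hp D kd rR we t (r x) = rR * we / r x * Bf (r x - rR)"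
      unfolding hp_def Bf_def ..
    moreover have "r x \<noteq> 0" "r0 \<noteq> 0" using rpos[OF that] assms by auto
    ultimately show ?thesis by (simp add: field_simps)
  qed
  have der: "(F has_real_derivative (- Bf (r x - rR) * (- r0 / r x))) (at x)"
    if "x \<in> {-rT..rT}" for x
  proof -
    have r': "(r has_real_derivative (- r0 / r x)) (at x)"
    proof -
      have i: "((\<lambda>x. rT\<^sup>2 + r0\<^sup>2 - 2 * r0 * x) has_real_derivative (- 2 * r0)) (at x)"
        by (auto intro!: derivative_eq_intros)
      have "(r has_real_derivative inverse (r x) / 2 * (- 2 * r0)) (at x)"
        using DERIV_chain2[OF DERIV_real_sqrt[OF arg[OF that]] i] unfolding r_def[abs_def] o_def by simp
      moreover have "inverse (r x) / 2 * (- 2 * r0) = - r0 / r x"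
        by (simp add: inverse_eq_divide)
      ultimately show ?thesis by simp
    qed
    have "((\<lambda>x. r x - rR) has_real_derivative (- r0 / r x)) (at x)"
      using DERIV_diff[OF r' DERIV_const[of rR]] by simp
    from DERIV_chain2[OF xi1_deriv[OF D t] this]
    show ?thesis unfolding F_def[abs_def] Bf_def .
  qed
  have "((\<lambda>x. - Bf (r x - rR) * (- r0 / r x)) has_integral (F rT - F (- rT))) {-rT..rT}"
  proof (rule fundamental_theorem_of_calculus)
    show "- rT \<le> rT" using assms by simp
    fix x assume x: "x \<in> {-rT..rT}"
    show "(F has_vector_derivative (- Bf (r x - rR) * (- r0 / r x))) (at x within {-rT..rT})"
      using has_field_derivative_at_within[OF der[OF x]]
      by (simp only: has_real_derivative_iff_has_vector_derivative)
  qed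
  then have "((\<lambda>x. rR * we / r0 * (- Bf (r x - rR) * (- r0 / r x))) has_integral
      rR * we / r0 * (F rT - F (- rT))) {-rT..rT}"
    by (rule has_integral_mult_right)
  then have "((\<lambda>x. hp D kd rR we t (r x)) has_integral rR * we / r0 * (F rT - F (- rT))) {-rT..rT}"
    by (rule has_integral_eq[rotated]) (simp add: hp_eq)
  then have "integral {-rT..rT} (\<lambda>x. hp D kd rR we t (r x)) = rR * we / r0 * (F rT - F (- rT))"
    by (rule integral_unique)
  moreover have "r rT = r0 - rT"
  proof -
    have "rT\<^sup>2 + r0\<^sup>2 - 2 * r0 * rT = (r0 - rT)\<^sup>2" by (simp add: power2_eq_square algebra_simps)
    then show ?thesis using assms by (simp add: r_def)
  qed
  moreover have "r (- rT) = r0 + rT"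
  proof -
    have "rT\<^sup>2 + r0\<^sup>2 - 2 * r0 * (- rT) = (r0 + rT)\<^sup>2" by (simp add: power2_eq_square algebra_simps)
    then show ?thesis using assms by (simp add: r_def)
  qed
  ultimately have "integral {-rT..rT} (\<lambda>x. hp D kd rR we t (r x)) =
     rR * we / r0 * (xi1 D kd rR we t (r0 - rT - rR) - xi1 D kd rR we t (r0 + rT - rR))"
    unfolding F_def by simp
  moreover have "hs D kd rR rT r0 we t = 1 / (2 * rT) * integral {-rT..rT} (\<lambda>x. hp D kd rR we t (r x))"
    unfolding hs_def r_def ..
  ultimately show ?thesis by simp
qed

end
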